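(* With the notation of the context, suppose there are two sample points $\bm x_\alpha,\bm x_\beta$ such that $$\min_{j\in J_{\geq,\alpha}}u_j(\bm x_\beta)>u^*(\bm x_\beta)=u_\beta(\bm x_\beta).$$ Then there exists a point $\bm x_\gamma\in\mathcal{L}(\bm x_\alpha,\bm x_\beta)=\{\lambda\bm x_\alpha+(1-\lambda)\bm x_\beta:\lambda\in(0,1)\}$ and an affine local piece $u_\gamma$ of $u^*$ with $u^*(\bm x_\gamma)=u_\gamma(\bm x_\gamma)$ such that $$u_\gamma(\bm x_\alpha)\ge u_\alpha(\bm x_\alpha),\qquad u_\gamma(\bm x_\beta)\le u_\beta(\bm x_\beta).$$ Moreover, after adding $(\bm x_\gamma,u_\gamma)$ to the sample set (and recomputing $J_{\geq,\alpha}$ accordingly), $\min_{j\in J_{\geq,\alpha}}u_j(\bm x_\beta)\le u_\beta(\bm x_\beta)$.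
   Context: Let $\Omega\subseteq\mathbb{R}^{n_x}$ be a convex polyhedron and $u^*:\Omega\to\mathbb{R}$ a continuous piecewise affine (PWA) function: $\Omega$ is the union of finitely many closed convex polyhedra (local regions) with pairwise disjoint interiors, and on each local region $u^*$ coincides with an affine function (its local piece). Sample points $\bm x_1,\dots,\bm x_{N_s}\in\Omega$ are given, each lying in the interior of a unique order (UO) region $\Gamma(\bm x_i)$ (a closed polyhedron inside a local region on whose interior the order of all distinct local pieces of $u^*$ is constant), and $u_i$ denotes the local piece of $u^*$ on $\Gamma(\bm x_i)$, so $u_i(\bm x_i)=u^*(\bm x_i)$. Define $J_{\geq,i}=\{j: u_j(\bm x_i)\ge u_i(\bm x_i)\}$, where $j$ ranges over the indices of all current sample points. *)

theory Defs
  imports "HOL-Analysis.Analysis"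
begin

definition affine_fun :: "(real ^ 'n \<Rightarrow> real) \<Rightarrow> bool" where
  "affine_fun f \<longleftrightarrow> (\<exists>a b. \<forall>x. f x = a \<bullet> x + b)"

definition is_cont_pwa ::
  "(real ^ 'n) set \<Rightarrow> (real ^ 'n \<Rightarrow> real) \<Rightarrow> nat set \<Rightarrow> (nat \<Rightarrow> (real ^ 'n) set)
     \<Rightarrow> (nat \<Rightarrow> real ^ 'n \<Rightarrow> real) \<Rightarrow> bool" where
  "is_cont_pwa Omega ustar K R P \<longleftrightarrow>
     finite K \<and> continuous_on Omega ustar \<and> Omega = (\<Union>k\<in>K. R k) \<and>
     (\<forall>k\<in>K. polyhedron (R k) \<and> closed (R k) \<and> convex (R k)) \<and>
     (\<forall>k\<in>K. \<forall>l\<in>K. k \<noteq> l \<longrightarrow> interior (R k) \<inter> interior (R l) = {}) \<and>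
     (\<forall>k\<in>K. affine_fun (P k) \<and> (\<forall>x\<in>R k. ustar x = P k x))"

definition uo_region ::
  "nat set \<Rightarrow> (nat \<Rightarrow> (real ^ 'n) set) \<Rightarrow> (nat \<Rightarrow> real ^ 'n \<Rightarrow> real) \<Rightarrow> nat
     \<Rightarrow> (real ^ 'n) set \<Rightarrow> bool" where
  "uo_region K R P k G \<longleftrightarrow>
     k \<in> K \<and> polyhedron G \<and> closed G \<and> G \<subseteq> R k \<and>
     (\<forall>x\<in>interior G. \<forall>y\<in>interior G. \<forall>i\<in>K. \<forall>j\<in>K.
        sgn (P i x - P j x) = sgn (P i y - P j y))"

definition J_ge ::
  "nat set \<Rightarrow> (nat \<Rightarrow> real ^ 'n) \<Rightarrow> (nat \<Rightarrow> real ^ 'n \<Rightarrow> real) \<Rightarrow> nat \<Rightarrow> nat set" where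
  "J_ge I xs us i = {j\<in>I. us j (xs i) \<ge> us i (xs i)}"

end

theory Submission
  imports Defs
begin

theorem mainTheorem2:
  fixes Omega :: "(real ^ 'n) set"
    and ustar :: "real ^ 'n \<Rightarrow> real"
    and K :: "nat set" and R :: "nat \<Rightarrow> (real ^ 'n) set" and P :: "nat \<Rightarrow> real ^ 'n \<Rightarrow> real"
    and I :: "nat set" and xs :: "nat \<Rightarrow> real ^ 'n" and us :: "nat \<Rightarrow> real ^ 'n \<Rightarrow> real"
    and Gam :: "nat \<Rightarrow> (real ^ 'n) set" and reg :: "nat \<Rightarrow> nat"
    and \<alpha> \<beta> :: nat
  assumes Omega: "convex Omega" "polyhedron Omega"
    and pwa: "is_cont_pwa Omega ustar K R P"
    and I: "finite I"
    and samples: "\<forall>i\<in>I. uo_region K R P (reg i) (Gam i) \<and> xs i \<in> interior (Gam i)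
                          \<and> us i = P (reg i)"
    and ab: "\<alpha> \<in> I" "\<beta> \<in> I"
    and hyp: "Min ((\<lambda>j. us j (xs \<beta>)) ` J_ge I xs us \<alpha>) > ustar (xs \<beta>)"
             "ustar (xs \<beta>) = us \<beta> (xs \<beta>)"
  shows "\<exists>x\<gamma> u\<gamma>.
           (\<exists>t::real. 0 < t \<and> t < 1 \<and> x\<gamma> = t *\<^sub>R xs \<alpha> + (1 - t) *\<^sub>R xs \<beta>) \<and>
           (\<exists>k\<in>K. x\<gamma> \<in> R k \<and> u\<gamma> = P k) \<and> ustar x\<gamma> = u\<gamma> x\<gamma> \<and>
           u\<gamma> (xs \<alpha>) \<ge> us \<alpha> (xs \<alpha>) \<and> u\<gamma> (xs \<beta>) \<le> us \<beta> (xs \<beta>) \<and>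
           (\<forall>g. g \<notin> I \<longrightarrow>
              Min ((\<lambda>j. (us(g := u\<gamma>)) j (xs \<beta>)) `
                     J_ge (insert g I) (xs(g := x\<gamma>)) (us(g := u\<gamma>)) \<alpha>)
              \<le> us \<beta> (xs \<beta>))"
proof -
  define xa where "xa = xs \<alpha>"
  define xb where "xb = xs \<beta>"
  define g where "g = (\<lambda>t::real. t *\<^sub>R xa + (1 - t) *\<^sub>R xb)"
  have pw: "finite K" "continuous_on Omega ustar" "Omega = (\<Union>k\<in>K. R k)"
    "\<And>k. k\<in>K \<Longrightarrow> closed (R k) \<and> convex (R k)"
    "\<And>k. k\<in>K \<Longrightarrow> affine_fun (P k) \<and> (\<forall>x\<in>R k. ustar x = P k x)"
    using pwa unfolding is_cont_pwa_def by auto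
  have aff: "P k (g t) = t * P k xa + (1 - t) * P k xb" if kK: "k \<in> K" for k t
  proof -
    obtain a b where ab: "\<forall>x. P k x = a \<bullet> x + b" using pw(5)[OF kK] unfolding affine_fun_def by metis
    show ?thesis unfolding g_def by (simp only: ab) (simp add: inner_add_right inner_diff_right algebra_simps)
  qed
  have samp: "reg i \<in> K \<and> xs i \<in> R (reg i) \<and> ustar (xs i) = us i (xs i)
      \<and> interior (Gam i) \<subseteq> R (reg i)" if "i \<in> I" for i
  proof -
    have u: "uo_region K R P (reg i) (Gam i)" "xs i \<in> interior (Gam i)" "us i = P (reg i)"
      using samples that by auto
    hence "reg i \<in> K" "Gam i \<subseteq> R (reg i)" unfolding uo_region_def by auto
    moreover have "interior (Gam i) \<subseteq> Gam i" by (rule interior_subset)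
    ultimately show ?thesis using u pw(5) by auto
  qed
  define f1 where "f1 = ustar xa"
  define f0 where "f0 = ustar xb"
  have f1: "f1 = us \<alpha> xa" using samp[OF ab(1)] unfolding f1_def xa_def by simp
  have f0: "f0 = us \<beta> xb" using hyp(2) unfolding f0_def xb_def by simp
  have "\<alpha> \<in> J_ge I xs us \<alpha>" using ab unfolding J_ge_def by auto
  hence "Min ((\<lambda>j. us j (xs \<beta>)) ` J_ge I xs us \<alpha>) \<le> us \<alpha> (xs \<beta>)"
    using I by (intro Min_le) (auto simp: J_ge_def)
  hence Ba: "us \<alpha> xb > f0" using hyp(1) unfolding f0_def xb_def by simp
  have xaO: "xa \<in> Omega" and xbO: "xb \<in> Omega"
    using samp[OF ab(1)] samp[OF ab(2)] pw(3) unfolding xa_def xb_def by auto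
  have gO: "g t \<in> Omega" if "t \<in> {0..1}" for t
    using convexD[OF Omega(1) xaO xbO, of t "1 - t"] that unfolding g_def by auto
  have gcont: "(g \<longlongrightarrow> g t) (at t within S)" for t S
    unfolding g_def by (intro tendsto_intros)
  have gcon: "continuous_on S g" for S
    unfolding g_def by (intro continuous_intros)
  define d where "d = (\<lambda>t. ustar (g t) - (t * f1 + (1 - t) * f0))"
  have dk: "d t = t * (P k xa - f1) + (1 - t) * (P k xb - f0)" if "k \<in> K" "g t \<in> R k" for k t
    using pw(5)[OF that(1)] that aff[OF that(1)] unfolding d_def by (auto simp: algebra_simps)
  have "g 1 \<in> interior (Gam \<alpha>)" using samples ab unfolding g_def xa_def by auto
  hence "\<forall>\<^sub>F t in at_left 1. g t \<in> interior (Gam \<alpha>)"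
    using topological_tendstoD[OF gcont] by blast
  then obtain b where b: "b < 1" "\<And>t. b < t \<Longrightarrow> t < 1 \<Longrightarrow> g t \<in> interior (Gam \<alpha>)"
    unfolding eventually_at_left[of 0 "1::real", simplified] by blast
  have dpos1: "d t > 0" if "b < t" "t < 1" for t
  proof -
    have "g t \<in> R (reg \<alpha>)" using b(2)[OF that] samp[OF ab(1)] by auto
    hence "d t = t * (P (reg \<alpha>) xa - f1) + (1 - t) * (P (reg \<alpha>) xb - f0)"
      using dk samp[OF ab(1)] by blast
    moreover have "P (reg \<alpha>) xa = f1" "P (reg \<alpha>) xb > f0"
      using samples ab f1 Ba by auto
    ultimately show ?thesis using that by simp
  qed
  define c where "c = (max b 0 + 1) / 2"
  have c: "0 \<le> c" "c < 1" "b < c" using b(1) unfolding c_def by auto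
  define T where "T = {0..c} \<inter> d -` {..0}"
  have dcont: "continuous_on {0..c} d"
  proof -
    have "continuous_on {0..c} (\<lambda>t. ustar (g t))"
      using continuous_on_compose2[OF pw(2) gcon, of "{0..c}"] gO c by force
    thus ?thesis unfolding d_def by (intro continuous_intros)
  qed
  have "closed T" unfolding T_def by (rule continuous_closed_preimage[OF dcont]) auto
  moreover have "bounded T" unfolding T_def by (rule bounded_subset[of "{0..c}"]) auto
  moreover have "0 \<in> T" unfolding T_def d_def g_def f0_def using c by simp
  ultimately obtain t0 where t0: "t0 \<in> T" "\<And>t. t \<in> T \<Longrightarrow> t \<le> t0"
    using compact_attains_sup[of T] compact_eq_bounded_closed by blast
  have t0b: "0 \<le> t0" "t0 \<le> c" "d t0 \<le> 0" using t0(1) unfolding T_def by auto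
  have dpos: "d t > 0" if "t0 < t" "t < 1" for t
  proof (cases "t \<le> c")
    case True
    hence "t \<notin> T" using t0(2) that by force
    hence "\<not> d t \<le> 0" using True t0b that unfolding T_def by auto
    thus ?thesis by simp
  next
    case False thus ?thesis using dpos1 c that by simp
  qed
  \<comment> \<open>find a piece active at t0 and slightly to the right\<close>
  define K0 where "K0 = {k\<in>K. g t0 \<notin> R k}"
  have "finite K0" using pw(1) unfolding K0_def by simp
  moreover have "\<forall>k\<in>K0. \<forall>\<^sub>F t in at_right t0. g t \<in> - R k"
  proof
    fix k assume "k \<in> K0"
    hence "open (- R k)" "g t0 \<in> - R k" using pw(4) unfolding K0_def by auto
    thus "\<forall>\<^sub>F t in at_right t0. g t \<in> - R k" using topological_tendstoD[OF gcont] by blast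
  qed
  ultimately have ev1: "\<forall>\<^sub>F t in at_right t0. \<forall>k\<in>K0. g t \<in> - R k"
    by (rule eventually_ball_finite)
  have ev2: "\<forall>\<^sub>F t in at_right t0. t0 < t \<and> t < 1"
  proof -
    have "\<forall>\<^sub>F t in at_right t0. t \<in> {t0<..<1}"
      using eventually_at_right_real[of t0 1] c t0b by linarith
    thus ?thesis by simp
  qed
  obtain s where s: "\<forall>k\<in>K0. g s \<in> - R k" "t0 < s" "s < 1"
    using eventually_happens[OF eventually_conj[OF ev1 ev2]] trivial_limit_at_right_real by blast
  have "g s \<in> Omega" using gO s t0b by simp
  then obtain k where k: "k \<in> K" "g s \<in> R k" using pw(3) by blast
  hence kt0: "g t0 \<in> R k" using s(1) unfolding K0_def by auto
  define A where "A = P k xa - f1"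
  define B where "B = P k xb - f0"
  have e0: "t0 * A + (1 - t0) * B \<le> 0" using dk[OF k(1) kt0] t0b unfolding A_def B_def by simp
  have e1: "s * A + (1 - s) * B > 0" using dk[OF k] dpos[OF s(2,3)] unfolding A_def B_def by simp
  have AB: "A > B"
  proof (rule ccontr)
    assume "\<not> A > B"
    hence "(s - t0) * (A - B) \<le> 0" using s by (intro mult_nonneg_nonpos) auto
    thus False using e0 e1 by (simp add: algebra_simps)
  qed
  have Bn: "B \<le> 0"
  proof -
    have "t0 * (A - B) \<ge> 0" using AB t0b by simp
    thus ?thesis using e0 by (simp add: algebra_simps)
  qed
  have Ap: "A \<ge> 0"
  proof -
    have "(1 - s) * (A - B) \<ge> 0" using AB s by simp
    thus ?thesis using e1 by (simp add: algebra_simps)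
  qed
  have u1: "P k xa \<ge> us \<alpha> (xs \<alpha>)" using Ap f1 unfolding A_def xa_def by simp
  have u2: "P k xb \<le> us \<beta> (xs \<beta>)" using Bn f0 unfolding B_def xb_def by simp
  show ?thesis
  proof (rule exI[of _ "g s"], rule exI[of _ "P k"], intro conjI allI impI)
    show "\<exists>t::real. 0 < t \<and> t < 1 \<and> g s = t *\<^sub>R xs \<alpha> + (1 - t) *\<^sub>R xs \<beta>"
      using s t0b unfolding g_def xa_def xb_def by (intro exI[of _ s]) auto
    show "\<exists>k'\<in>K. g s \<in> R k' \<and> P k = P k'" using k by blast
    show "ustar (g s) = P k (g s)" using pw(5) k by blast
    show "P k (xs \<alpha>) \<ge> us \<alpha> (xs \<alpha>)" using u1 unfolding xa_def .
    show "P k (xs \<beta>) \<le> us \<beta> (xs \<beta>)" using u2 unfolding xb_def .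
  next
    fix gg assume gg: "gg \<notin> I"
    have neq: "\<alpha> \<noteq> gg" "\<beta> \<noteq> gg" using gg ab by auto
    have mem: "gg \<in> J_ge (insert gg I) (xs(gg := g s)) (us(gg := P k)) \<alpha>"
      using neq u1 unfolding J_ge_def xa_def by auto
    have fin: "finite (J_ge (insert gg I) (xs(gg := g s)) (us(gg := P k)) \<alpha>)"
      using I unfolding J_ge_def by auto
    have "Min ((\<lambda>j. (us(gg := P k)) j (xs \<beta>)) `
                     J_ge (insert gg I) (xs(gg := g s)) (us(gg := P k)) \<alpha>)
          \<le> (us(gg := P k)) gg (xs \<beta>)"
      using fin mem by (intro Min_le) auto
    thus "Min ((\<lambda>j. (us(gg := P k)) j (xs \<beta>)) `
                     J_ge (insert gg I) (xs(gg := g s)) (us(gg := P k)) \<alpha>)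
          \<le> us \<beta> (xs \<beta>)" using u2 unfolding xb_def by simp
  qed
qed

end
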